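(* Let $R$ be a Noetherian hyperring. The following are equivalent: (i) $R$ is Artinian; (ii) $Spec(R)$ with the Zariski topology is discrete and finite; (iii) $Spec(R)$ with the Zariski topology is discrete.
   Context: Standing conventions. A hyperring means a commutative Krasner hyperring with identity: a set $R$ with a hyperoperation $+:R\times R\to\mathcal P^*(R)$ (nonempty subsets; for subsets $A,B$ one sets $A+B=\bigcup_{a\in A,b\in B}a+b$) and a binary operation $\cdot$ such that: $+$ is associative and commutative; there is $0\in R$ with $0+x=\{x\}$ for all $x$; every $x$ has a unique $-x$ with $0\in x+(-x)$; $z\in x+y$ implies $y\in -x+z$ and $x\in z-y$; $(R,\cdot)$ is a commutative monoid with identity $1$; $0\cdot x=0$; and $x(y+z)=xy+xz$. A hyperideal of $R$ is a nonempty $I\subseteq R$ with $a-b\subseteq I$ and $ra\in I$ for all $a,b\in I$, $r\in R$. $R$ is Noetherian (resp. Artinian) if every ascending (resp. descending) chain of hyperideals of $R$ stabilizes. A proper hyperideal $P$ is prime if $ab\in P$ implies $a\in P$ or $b\in P$. $Spec(R)$ is the set of prime hyperideals of $R$; for $S\subseteq R$, $V(S)=\{P\in Spec(R): S\subseteq P\}$. The Zariski topology on $Spec(R)$ is the topology whose closed sets are the sets $V(I)$, $I$ a hyperideal of $R$. *)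

theory Defs
  imports "HOL-Analysis.Analysis"
begin

text \<open>A commutative Krasner hyperring with identity is given by a carrier R,
a hyperaddition add (values are subsets), a multiplication mul, zero z and identity u.\<close>

definition hsum :: "('a \<Rightarrow> 'a \<Rightarrow> 'a set) \<Rightarrow> 'a set \<Rightarrow> 'a set \<Rightarrow> 'a set" where
  "hsum add A B = (\<Union>a\<in>A. \<Union>b\<in>B. add a b)"

definition hneg :: "'a set \<Rightarrow> ('a \<Rightarrow> 'a \<Rightarrow> 'a set) \<Rightarrow> 'a \<Rightarrow> 'a \<Rightarrow> 'a" where
  "hneg R add z x = (THE y. y \<in> R \<and> z \<in> add x y)"

definition hyperring ::
  "'a set \<Rightarrow> ('a \<Rightarrow> 'a \<Rightarrow> 'a set) \<Rightarrow> ('a \<Rightarrow> 'a \<Rightarrow> 'a) \<Rightarrow> 'a \<Rightarrow> 'a \<Rightarrow> bool" where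
  "hyperring R add mul z u \<longleftrightarrow>
     (\<forall>x\<in>R. \<forall>y\<in>R. add x y \<subseteq> R \<and> add x y \<noteq> {}) \<and>
     (\<forall>x\<in>R. \<forall>y\<in>R. \<forall>w\<in>R. hsum add (add x y) {w} = hsum add {x} (add y w)) \<and>
     (\<forall>x\<in>R. \<forall>y\<in>R. add x y = add y x) \<and>
     z \<in> R \<and> (\<forall>x\<in>R. add z x = {x}) \<and>
     (\<forall>x\<in>R. \<exists>!y. y \<in> R \<and> z \<in> add x y) \<and>
     (\<forall>x\<in>R. \<forall>y\<in>R. \<forall>w\<in>R. w \<in> add x y \<longrightarrow>
          y \<in> add (hneg R add z x) w \<and> x \<in> add w (hneg R add z y)) \<and>
     (\<forall>x\<in>R. \<forall>y\<in>R. mul x y \<in> R) \<and>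
     (\<forall>x\<in>R. \<forall>y\<in>R. \<forall>w\<in>R. mul (mul x y) w = mul x (mul y w)) \<and>
     (\<forall>x\<in>R. \<forall>y\<in>R. mul x y = mul y x) \<and>
     u \<in> R \<and> (\<forall>x\<in>R. mul u x = x) \<and>
     (\<forall>x\<in>R. mul z x = z) \<and>
     (\<forall>x\<in>R. \<forall>y\<in>R. \<forall>w\<in>R. mul x ` (add y w) = add (mul x y) (mul x w))"

definition hyperideal ::
  "'a set \<Rightarrow> ('a \<Rightarrow> 'a \<Rightarrow> 'a set) \<Rightarrow> ('a \<Rightarrow> 'a \<Rightarrow> 'a) \<Rightarrow> 'a \<Rightarrow> 'a set \<Rightarrow> bool" where
  "hyperideal R add mul z I \<longleftrightarrow>
     I \<noteq> {} \<and> I \<subseteq> R \<and>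
     (\<forall>a\<in>I. \<forall>b\<in>I. add a (hneg R add z b) \<subseteq> I) \<and>
     (\<forall>r\<in>R. \<forall>a\<in>I. mul r a \<in> I)"

definition hnoetherian ::
  "'a set \<Rightarrow> ('a \<Rightarrow> 'a \<Rightarrow> 'a set) \<Rightarrow> ('a \<Rightarrow> 'a \<Rightarrow> 'a) \<Rightarrow> 'a \<Rightarrow> bool" where
  "hnoetherian R add mul z \<longleftrightarrow>
     (\<forall>I :: nat \<Rightarrow> 'a set. (\<forall>n. hyperideal R add mul z (I n)) \<and> (\<forall>n. I n \<subseteq> I (Suc n))
        \<longrightarrow> (\<exists>m. \<forall>n\<ge>m. I n = I m))"

definition hartinian ::
  "'a set \<Rightarrow> ('a \<Rightarrow> 'a \<Rightarrow> 'a set) \<Rightarrow> ('a \<Rightarrow> 'a \<Rightarrow> 'a) \<Rightarrow> 'a \<Rightarrow> bool" where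
  "hartinian R add mul z \<longleftrightarrow>
     (\<forall>I :: nat \<Rightarrow> 'a set. (\<forall>n. hyperideal R add mul z (I n)) \<and> (\<forall>n. I (Suc n) \<subseteq> I n)
        \<longrightarrow> (\<exists>m. \<forall>n\<ge>m. I n = I m))"

definition prime_hyperideal ::
  "'a set \<Rightarrow> ('a \<Rightarrow> 'a \<Rightarrow> 'a set) \<Rightarrow> ('a \<Rightarrow> 'a \<Rightarrow> 'a) \<Rightarrow> 'a \<Rightarrow> 'a set \<Rightarrow> bool" where
  "prime_hyperideal R add mul z P \<longleftrightarrow>
     hyperideal R add mul z P \<and> P \<noteq> R \<and>
     (\<forall>a\<in>R. \<forall>b\<in>R. mul a b \<in> P \<longrightarrow> a \<in> P \<or> b \<in> P)"

definition hSpec ::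
  "'a set \<Rightarrow> ('a \<Rightarrow> 'a \<Rightarrow> 'a set) \<Rightarrow> ('a \<Rightarrow> 'a \<Rightarrow> 'a) \<Rightarrow> 'a \<Rightarrow> 'a set set" where
  "hSpec R add mul z = {P. prime_hyperideal R add mul z P}"

definition hV ::
  "'a set \<Rightarrow> ('a \<Rightarrow> 'a \<Rightarrow> 'a set) \<Rightarrow> ('a \<Rightarrow> 'a \<Rightarrow> 'a) \<Rightarrow> 'a \<Rightarrow> 'a set \<Rightarrow> 'a set set" where
  "hV R add mul z S = {P \<in> hSpec R add mul z. S \<subseteq> P}"

definition zariski ::
  "'a set \<Rightarrow> ('a \<Rightarrow> 'a \<Rightarrow> 'a set) \<Rightarrow> ('a \<Rightarrow> 'a \<Rightarrow> 'a) \<Rightarrow> 'a \<Rightarrow> 'a set topology" where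
  "zariski R add mul z = topology (\<lambda>U. \<exists>I. hyperideal R add mul z I \<and>
       U = hSpec R add mul z - hV R add mul z I)"

end

theory Submission
  imports Defs
begin

locale hr =
  fixes R :: "'a set" and add :: "'a \<Rightarrow> 'a \<Rightarrow> 'a set" and mul :: "'a \<Rightarrow> 'a \<Rightarrow> 'a"
    and z u :: 'a
  assumes H: "hyperring R add mul z u"
begin

lemmas HD = H[unfolded hyperring_def]
lemmas C1 = HD[THEN conjunct1]
lemmas C2 = HD[THEN conjunct2, THEN conjunct1]
lemmas C3 = HD[THEN conjunct2, THEN conjunct2, THEN conjunct1]
lemmas C4 = HD[THEN conjunct2, THEN conjunct2, THEN conjunct2, THEN conjunct1]
lemmas C5 = HD[THEN conjunct2, THEN conjunct2, THEN conjunct2, THEN conjunct2, THEN conjunct1]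
lemmas C6 = HD[THEN conjunct2, THEN conjunct2, THEN conjunct2, THEN conjunct2, THEN conjunct2, THEN conjunct1]
lemmas C7 = HD[THEN conjunct2, THEN conjunct2, THEN conjunct2, THEN conjunct2, THEN conjunct2, THEN conjunct2, THEN conjunct1]
lemmas C8 = HD[THEN conjunct2, THEN conjunct2, THEN conjunct2, THEN conjunct2, THEN conjunct2, THEN conjunct2, THEN conjunct2, THEN conjunct1]
lemmas C9 = HD[THEN conjunct2, THEN conjunct2, THEN conjunct2, THEN conjunct2, THEN conjunct2, THEN conjunct2, THEN conjunct2, THEN conjunct2, THEN conjunct1]
lemmas C10 = HD[THEN conjunct2, THEN conjunct2, THEN conjunct2, THEN conjunct2, THEN conjunct2, THEN conjunct2, THEN conjunct2, THEN conjunct2, THEN conjunct2, THEN conjunct1]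
lemmas C11 = HD[THEN conjunct2, THEN conjunct2, THEN conjunct2, THEN conjunct2, THEN conjunct2, THEN conjunct2, THEN conjunct2, THEN conjunct2, THEN conjunct2, THEN conjunct2, THEN conjunct1]
lemmas C12 = HD[THEN conjunct2, THEN conjunct2, THEN conjunct2, THEN conjunct2, THEN conjunct2, THEN conjunct2, THEN conjunct2, THEN conjunct2, THEN conjunct2, THEN conjunct2, THEN conjunct2, THEN conjunct1]
lemmas C13 = HD[THEN conjunct2, THEN conjunct2, THEN conjunct2, THEN conjunct2, THEN conjunct2, THEN conjunct2, THEN conjunct2, THEN conjunct2, THEN conjunct2, THEN conjunct2, THEN conjunct2, THEN conjunct2, THEN conjunct1]
lemmas C14 = HD[THEN conjunct2, THEN conjunct2, THEN conjunct2, THEN conjunct2, THEN conjunct2, THEN conjunct2, THEN conjunct2, THEN conjunct2, THEN conjunct2, THEN conjunct2, THEN conjunct2, THEN conjunct2, THEN conjunct2]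

abbreviation neg where "neg x \<equiv> hneg R add z x"

lemma add_closed: "x \<in> R \<Longrightarrow> y \<in> R \<Longrightarrow> add x y \<subseteq> R"
  using C1 by blast
lemma add_ne: "x \<in> R \<Longrightarrow> y \<in> R \<Longrightarrow> add x y \<noteq> {}"
  using C1 by blast
lemma add_comm: "x \<in> R \<Longrightarrow> y \<in> R \<Longrightarrow> add x y = add y x"
  using C3 by blast
lemma z_in: "z \<in> R" using C4 by blast
lemma u_in: "u \<in> R" using C11 by blast
lemma add_z: "x \<in> R \<Longrightarrow> add z x = {x}" using C5 by blast
lemma add_z2: "x \<in> R \<Longrightarrow> add x z = {x}" using add_z add_comm z_in by metis
lemma neg_ex: "x \<in> R \<Longrightarrow> \<exists>!y. y \<in> R \<and> z \<in> add x y" using C6 by blast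
lemma neg_prop: assumes "x \<in> R" shows "neg x \<in> R" "z \<in> add x (neg x)"
proof -
  have "neg x \<in> R \<and> z \<in> add x (neg x)" unfolding hneg_def
    by (rule theI'[OF neg_ex[OF assms]])
  then show "neg x \<in> R" "z \<in> add x (neg x)" by auto
qed
lemma neg_unique: "x \<in> R \<Longrightarrow> y \<in> R \<Longrightarrow> z \<in> add x y \<Longrightarrow> y = neg x"
  using neg_ex neg_prop by blast
lemma rev1: "x \<in> R \<Longrightarrow> y \<in> R \<Longrightarrow> w \<in> R \<Longrightarrow> w \<in> add x y \<Longrightarrow> y \<in> add (neg x) w"
  using C7 by blast
lemma rev2: "x \<in> R \<Longrightarrow> y \<in> R \<Longrightarrow> w \<in> R \<Longrightarrow> w \<in> add x y \<Longrightarrow> x \<in> add w (neg y)"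
  using C7 by blast
lemma mul_closed: "x \<in> R \<Longrightarrow> y \<in> R \<Longrightarrow> mul x y \<in> R" using C8 by blast
lemma mul_assoc: "x \<in> R \<Longrightarrow> y \<in> R \<Longrightarrow> w \<in> R \<Longrightarrow> mul (mul x y) w = mul x (mul y w)"
  using C9 by blast
lemma mul_comm: "x \<in> R \<Longrightarrow> y \<in> R \<Longrightarrow> mul x y = mul y x" using C10 by blast
lemma mul_u: "x \<in> R \<Longrightarrow> mul u x = x" using C12 by blast
lemma mul_u2: "x \<in> R \<Longrightarrow> mul x u = x" using mul_u mul_comm u_in by metis
lemma mul_z: "x \<in> R \<Longrightarrow> mul z x = z" using C13 by blast
lemma mul_z2: "x \<in> R \<Longrightarrow> mul x z = z" using mul_z mul_comm z_in by metis
lemma distrib: "x \<in> R \<Longrightarrow> y \<in> R \<Longrightarrow> w \<in> R \<Longrightarrow> mul x ` (add y w) = add (mul x y) (mul x w)"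
  using C14 by blast
lemma assoc0: "x \<in> R \<Longrightarrow> y \<in> R \<Longrightarrow> w \<in> R \<Longrightarrow> hsum add (add x y) {w} = hsum add {x} (add y w)"
  using C2 by blast

lemma assocA: assumes "a \<in> R" "b \<in> R" "c \<in> R" "t \<in> add a b" "w \<in> add t c"
  shows "\<exists>s \<in> add b c. w \<in> add a s"
proof -
  have "w \<in> hsum add (add a b) {c}" using assms unfolding hsum_def by blast
  then show ?thesis using assoc0[OF assms(1-3)] unfolding hsum_def by blast
qed
lemma assocB: assumes "a \<in> R" "b \<in> R" "c \<in> R" "s \<in> add b c" "w \<in> add a s"
  shows "\<exists>t \<in> add a b. w \<in> add t c"
proof -
  have "w \<in> hsum add {a} (add b c)" using assms unfolding hsum_def by blast
  then show ?thesis using assoc0[OF assms(1-3)] unfolding hsum_def by blast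
qed

lemma neg_neg: "x \<in> R \<Longrightarrow> neg (neg x) = x"
  by (metis add_comm neg_prop neg_unique)
lemma neg_z: "neg z = z"
  by (metis add_z neg_prop(2) singletonD z_in neg_prop(1))
lemma mul_neg: assumes "x \<in> R" "y \<in> R" shows "mul x (neg y) = neg (mul x y)"
proof -
  have "mul x z \<in> mul x ` add y (neg y)" using neg_prop[OF assms(2)] by blast
  then have "z \<in> add (mul x y) (mul x (neg y))"
    using distrib[OF assms neg_prop(1)[OF assms(2)]] mul_z2[OF assms(1)] by simp
  then show ?thesis using neg_unique mul_closed assms neg_prop by blast
qed
lemma neg_u_mul: "x \<in> R \<Longrightarrow> mul (neg u) x = neg x"
  by (metis mul_comm mul_neg mul_u2 neg_prop(1) u_in)
lemma neg_add: assumes "x \<in> R" "y \<in> R" "w \<in> add x y" shows "neg w \<in> add (neg x) (neg y)"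
proof -
  have "mul (neg u) w \<in> mul (neg u) ` add x y" using assms by blast
  then show ?thesis using distrib[OF neg_prop(1)[OF u_in] assms(1,2)] neg_u_mul assms add_closed
    by (metis subsetD)
qed

abbreviation ideal where "ideal I \<equiv> hyperideal R add mul z I"

lemma ideal_D: assumes "ideal I"
  shows "I \<noteq> {}" "I \<subseteq> R" "\<And>a b. a \<in> I \<Longrightarrow> b \<in> I \<Longrightarrow> add a (neg b) \<subseteq> I"
    "\<And>r a. r \<in> R \<Longrightarrow> a \<in> I \<Longrightarrow> mul r a \<in> I"
  using assms unfolding hyperideal_def by blast+

lemma ideal_I: "I \<noteq> {} \<Longrightarrow> I \<subseteq> R \<Longrightarrow> (\<And>a b. a \<in> I \<Longrightarrow> b \<in> I \<Longrightarrow> add a (neg b) \<subseteq> I)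
   \<Longrightarrow> (\<And>r a. r \<in> R \<Longrightarrow> a \<in> I \<Longrightarrow> mul r a \<in> I) \<Longrightarrow> ideal I"
  unfolding hyperideal_def by blast

lemma ideal_z: assumes "ideal I" shows "z \<in> I"
proof -
  obtain a where a: "a \<in> I" using ideal_D(1)[OF assms] by blast
  then have "a \<in> R" using ideal_D(2)[OF assms] by blast
  then show ?thesis using neg_prop(2) ideal_D(3)[OF assms a a] by blast
qed
lemma ideal_neg: assumes "ideal I" "a \<in> I" shows "neg a \<in> I"
proof -
  have aR: "a \<in> R" using assms ideal_D(2) by blast
  have "add z (neg a) \<subseteq> I" using ideal_D(3)[OF assms(1) ideal_z[OF assms(1)] assms(2)] .
  then show ?thesis using add_z neg_prop(1)[OF aR] by blast
qed
lemma ideal_add: assumes "ideal I" "a \<in> I" "b \<in> I" shows "add a b \<subseteq> I"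
proof -
  have bR: "b \<in> R" using assms ideal_D(2) by blast
  have "add a (neg (neg b)) \<subseteq> I" using ideal_D(3)[OF assms(1) assms(2) ideal_neg[OF assms(1,3)]] .
  then show ?thesis using neg_neg[OF bR] by simp
qed
lemma ideal_mul: assumes "ideal I" "r \<in> R" "a \<in> I" shows "mul r a \<in> I" "mul a r \<in> I"
proof -
  show "mul r a \<in> I" using ideal_D(4)[OF assms(1)] assms by blast
  then show "mul a r \<in> I" using mul_comm assms ideal_D(2)[OF assms(1)] by (metis subsetD)
qed
lemma ideal_R: "ideal R"
  by (rule ideal_I) (use z_in add_closed neg_prop mul_closed in auto)
lemma ideal_zero: "ideal {z}"
  by (rule ideal_I) (use z_in add_z neg_z mul_z2 in auto)
lemma ideal_u: assumes "ideal I" "u \<in> I" shows "I = R"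
proof
  show "I \<subseteq> R" using ideal_D(2)[OF assms(1)] .
  show "R \<subseteq> I" using ideal_mul(1)[OF assms(1) _ assms(2)] mul_u2 by force
qed
lemma ideal_Inter: assumes "K \<noteq> {}" "\<And>I. I \<in> K \<Longrightarrow> ideal I" shows "ideal (\<Inter>K)"
proof -
  have "z \<in> \<Inter>K" using ideal_z assms(2) by blast
  moreover obtain I0 where "I0 \<in> K" using assms(1) by blast
  then have "\<Inter>K \<subseteq> R" using ideal_D(2)[OF assms(2)] by blast
  ultimately show ?thesis
    by (intro ideal_I) (use ideal_D(3,4)[OF assms(2)] in blast)+
qed
lemma ideal_Int: assumes "ideal I" "ideal J" shows "ideal (I \<inter> J)"
  using ideal_Inter[of "{I, J}"] assms by auto

definition hs where "hs I J = {x \<in> R. \<exists>i\<in>I. \<exists>j\<in>J. x \<in> add i j}"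

lemma ideal_hs: assumes I: "ideal I" and J: "ideal J" shows "ideal (hs I J)"
proof -
  have IR: "I \<subseteq> R" and JR: "J \<subseteq> R" using ideal_D(2) I J by auto
  have ne: "z \<in> hs I J" unfolding hs_def using z_in ideal_z[OF I] ideal_z[OF J] add_z by blast
  have sub: "\<And>x y w. x \<in> hs I J \<Longrightarrow> y \<in> hs I J \<Longrightarrow> w \<in> add x (neg y) \<Longrightarrow> w \<in> hs I J"
  proof -
    fix x y w assume x: "x \<in> hs I J" and y: "y \<in> hs I J" and w: "w \<in> add x (neg y)"
    obtain i1 j1 where i1: "i1 \<in> I" and j1: "j1 \<in> J" and x1: "x \<in> add i1 j1" and xR: "x \<in> R"
      using x unfolding hs_def by blast
    obtain i2 j2 where i2: "i2 \<in> I" and j2: "j2 \<in> J" and y1: "y \<in> add i2 j2" and yR: "y \<in> R"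
      using y unfolding hs_def by blast
    have R1: "i1 \<in> R" "j1 \<in> R" "i2 \<in> R" "j2 \<in> R" using IR JR i1 j1 i2 j2 by auto
    have R2: "neg i2 \<in> R" "neg j2 \<in> R" "neg y \<in> R" using neg_prop R1 yR by auto
    have y': "neg y \<in> add (neg i2) (neg j2)" using neg_add[OF R1(3,4) y1] .
    obtain s where s: "s \<in> add j1 (neg y)" and ws: "w \<in> add i1 s"
      using assocA[OF R1(1,2) R2(3) x1 w] by blast
    have s': "s \<in> add (neg y) j1" using s add_comm R1 R2 by auto
    obtain q where q: "q \<in> add (neg j2) j1" and sq: "s \<in> add (neg i2) q"
      using assocA[OF R2(1,2) R1(2) y' s'] by blast
    have qR: "q \<in> R" using q add_closed R1 R2 by blast
    obtain p where p: "p \<in> add i1 (neg i2)" and wp: "w \<in> add p q"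
      using assocB[OF R1(1) R2(1) qR sq ws] by blast
    have pI: "p \<in> I" using p ideal_D(3)[OF I i1 i2] by blast
    have qJ: "q \<in> J" using q add_comm R1 R2 ideal_D(3)[OF J j1 j2] by auto
    have wR: "w \<in> R" using w add_closed xR R2 by blast
    show "w \<in> hs I J" unfolding hs_def using wR pI qJ wp by blast
  qed
  have mc: "\<And>r x. r \<in> R \<Longrightarrow> x \<in> hs I J \<Longrightarrow> mul r x \<in> hs I J"
  proof -
    fix r x assume r: "r \<in> R" and x: "x \<in> hs I J"
    obtain i j where i: "i \<in> I" and j: "j \<in> J" and x1: "x \<in> add i j" and xR: "x \<in> R"
      using x unfolding hs_def by blast
    have "mul r x \<in> add (mul r i) (mul r j)" using distrib[OF r, of i j] x1 IR JR i j by blast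
    then show "mul r x \<in> hs I J" unfolding hs_def using ideal_mul[OF I r i] ideal_mul[OF J r j]
      mul_closed r xR by blast
  qed
  show ?thesis
  proof (rule ideal_I)
    show "hs I J \<noteq> {}" using ne by blast
    show "hs I J \<subseteq> R" unfolding hs_def by blast
    show "\<And>a b. a \<in> hs I J \<Longrightarrow> b \<in> hs I J \<Longrightarrow> add a (neg b) \<subseteq> hs I J" using sub by blast
    show "\<And>r a. r \<in> R \<Longrightarrow> a \<in> hs I J \<Longrightarrow> mul r a \<in> hs I J" using mc by blast
  qed
qed

lemma hs_left: assumes "ideal I" "ideal J" shows "I \<subseteq> hs I J"
proof
  fix x assume x: "x \<in> I"
  then have "x \<in> R" using ideal_D(2)[OF assms(1)] by blast
  then show "x \<in> hs I J" unfolding hs_def using x ideal_z[OF assms(2)] add_z2 by blast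
qed
lemma hs_right: assumes "ideal I" "ideal J" shows "J \<subseteq> hs I J"
proof
  fix x assume x: "x \<in> J"
  then have "x \<in> R" using ideal_D(2)[OF assms(2)] by blast
  then show "x \<in> hs I J" unfolding hs_def using x ideal_z[OF assms(1)] add_z by blast
qed
lemma hs_mono: "I \<subseteq> I' \<Longrightarrow> J \<subseteq> J' \<Longrightarrow> hs I J \<subseteq> hs I' J'"
  unfolding hs_def by blast
lemma hs_least: assumes "ideal K" "I \<subseteq> K" "J \<subseteq> K" shows "hs I J \<subseteq> K"
  unfolding hs_def using ideal_add[OF assms(1)] assms(2,3) by blast

definition pr where "pr a = (\<lambda>r. mul r a) ` R"

lemma ideal_pr: assumes a: "a \<in> R" shows "ideal (pr a)"
proof -
  have ne: "pr a \<noteq> {}" unfolding pr_def using z_in by blast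
  have sub: "pr a \<subseteq> R" unfolding pr_def using mul_closed a by blast
  have d: "\<And>x y. x \<in> pr a \<Longrightarrow> y \<in> pr a \<Longrightarrow> add x (neg y) \<subseteq> pr a"
  proof -
    fix x y assume "x \<in> pr a" "y \<in> pr a"
    then obtain r s where r: "r \<in> R" "x = mul r a" and s: "s \<in> R" "y = mul s a" unfolding pr_def by blast
    have "neg y = mul a (neg s)" using mul_neg[OF a s(1)] s mul_comm a by simp
    then have "add x (neg y) = mul a ` add r (neg s)"
      using distrib[OF a r(1) neg_prop(1)[OF s(1)]] r mul_comm a by simp
    also have "\<dots> \<subseteq> pr a" unfolding pr_def using add_closed[OF r(1) neg_prop(1)[OF s(1)]] mul_comm a
      by (auto intro!: image_eqI)
    finally show "add x (neg y) \<subseteq> pr a" .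
  qed
  have m: "\<And>t x. t \<in> R \<Longrightarrow> x \<in> pr a \<Longrightarrow> mul t x \<in> pr a"
  proof -
    fix t x assume t: "t \<in> R" and "x \<in> pr a"
    then obtain r where r: "r \<in> R" "x = mul r a" unfolding pr_def by blast
    have "mul t x = mul (mul t r) a" using mul_assoc[OF t r(1) a] r by simp
    then show "mul t x \<in> pr a" unfolding pr_def using mul_closed[OF t r(1)] by blast
  qed
  show ?thesis by (rule ideal_I[OF ne sub d m])
qed
lemma pr_self: "a \<in> R \<Longrightarrow> a \<in> pr a"
  unfolding pr_def using u_in mul_u by (auto intro!: image_eqI[where x=u])

definition col where "col J a = {r \<in> R. mul r a \<in> J}"

lemma ideal_col: assumes J: "ideal J" and a: "a \<in> R" shows "ideal (col J a)"
proof -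
  have ne: "z \<in> col J a" unfolding col_def using z_in mul_z a ideal_z[OF J] by simp
  have d: "\<And>r s. r \<in> col J a \<Longrightarrow> s \<in> col J a \<Longrightarrow> add r (neg s) \<subseteq> col J a"
  proof
    fix r s w assume r: "r \<in> col J a" and s: "s \<in> col J a" and w: "w \<in> add r (neg s)"
    have rR: "r \<in> R" and sR: "s \<in> R" using r s unfolding col_def by auto
    have wR: "w \<in> R" using w add_closed rR neg_prop(1)[OF sR] by blast
    have "mul a w \<in> add (mul a r) (mul a (neg s))" using distrib[OF a rR neg_prop(1)[OF sR]] w by blast
    moreover have "mul a w = mul w a" "mul a r = mul r a" "mul a (neg s) = neg (mul s a)"
      using mul_neg[OF a sR] mul_comm a rR sR wR by auto
    ultimately have "mul w a \<in> add (mul r a) (neg (mul s a))" by simp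
    moreover have "add (mul r a) (neg (mul s a)) \<subseteq> J" using ideal_D(3)[OF J] r s unfolding col_def by blast
    ultimately show "w \<in> col J a" unfolding col_def using wR by blast
  qed
  have m: "\<And>t r. t \<in> R \<Longrightarrow> r \<in> col J a \<Longrightarrow> mul t r \<in> col J a"
    unfolding col_def using mul_assoc ideal_mul(1)[OF J] mul_closed a by auto
  show ?thesis by (rule ideal_I) (use ne d m in \<open>auto simp: col_def\<close>)
qed

abbreviation prime where "prime P \<equiv> prime_hyperideal R add mul z P"

lemma prime_D: assumes "prime P" shows "ideal P" "P \<noteq> R"
  "\<And>a b. a \<in> R \<Longrightarrow> b \<in> R \<Longrightarrow> mul a b \<in> P \<Longrightarrow> a \<in> P \<or> b \<in> P"
  using assms unfolding prime_hyperideal_def by blast+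

lemma prime_Int: assumes P: "prime P" and I: "ideal I" and J: "ideal J" and s: "I \<inter> J \<subseteq> P"
  shows "I \<subseteq> P \<or> J \<subseteq> P"
proof (rule ccontr)
  assume "\<not> (I \<subseteq> P \<or> J \<subseteq> P)"
  then obtain a b where a: "a \<in> I" "a \<notin> P" and b: "b \<in> J" "b \<notin> P" by blast
  have aR: "a \<in> R" and bR: "b \<in> R" using a b ideal_D(2) I J by auto
  have "mul a b \<in> I" using ideal_mul(2)[OF I bR a(1)] .
  moreover have "mul a b \<in> J" using ideal_mul(1)[OF J aR b(1)] .
  ultimately have "mul a b \<in> P" using s by blast
  then show False using prime_D(3)[OF P aR bR] a b by blast
qed

lemma prime_Inter: assumes P: "prime P" and F: "finite F" "F \<noteq> {}" and id: "\<And>I. I \<in> F \<Longrightarrow> ideal I"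
  and s: "\<Inter>F \<subseteq> P" shows "\<exists>I\<in>F. I \<subseteq> P"
  using F id s
proof (induction F rule: finite_ne_induct)
  case (singleton x) then show ?case by auto
next
  case (insert x F)
  have "ideal (\<Inter>F)" using ideal_Inter insert by auto
  then have "x \<subseteq> P \<or> \<Inter>F \<subseteq> P" using prime_Int[OF P] insert by auto
  then show ?case using insert by auto
qed

lemma prime_not_u: "prime P \<Longrightarrow> u \<notin> P"
  using ideal_u prime_D by blast

definition allmax where "allmax \<longleftrightarrow> (\<forall>P J. prime P \<longrightarrow> ideal J \<longrightarrow> P \<subseteq> J \<longrightarrow> J = P \<or> J = R)"

lemma dec_le: assumes "\<And>n. J (Suc n) \<subseteq> J n" "n \<le> k" shows "J k \<subseteq> (J n :: 'b set)"
  using assms(2) by (induction k rule: dec_induct) (use assms(1) in blast)+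

lemma noeth_max: assumes N: "hnoetherian R add mul z" and ne: "S \<noteq> {}" and id: "\<And>I. I \<in> S \<Longrightarrow> ideal I"
  shows "\<exists>M\<in>S. \<forall>J\<in>S. M \<subseteq> J \<longrightarrow> J = M"
proof (rule ccontr)
  assume "\<not> ?thesis"
  then have ex: "\<forall>M\<in>S. \<exists>J. J \<in> S \<and> M \<subset> J"
    by (metis psubsetI)
  define f where "f M = (SOME J. J \<in> S \<and> M \<subset> J)" for M
  have f: "M \<in> S \<Longrightarrow> f M \<in> S \<and> M \<subset> f M" for M
  proof -
    assume "M \<in> S"
    then have "\<exists>J. J \<in> S \<and> M \<subset> J" using ex by blast
    from someI_ex[OF this] show ?thesis unfolding f_def .
  qed
  obtain I0 where I0: "I0 \<in> S" using ne by blast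
  define c where "c n = (f ^^ n) I0" for n
  have cS: "c n \<in> S" for n
  proof (induction n)
    case 0 then show ?case using I0 by (simp add: c_def)
  next
    case (Suc n)
    have "c (Suc n) = f (c n)" by (simp add: c_def)
    then show ?case using f[OF Suc] by simp
  qed
  have cs: "c n \<subset> c (Suc n)" for n
  proof -
    have "c (Suc n) = f (c n)" by (simp add: c_def)
    then show ?thesis using f[OF cS[of n]] by simp
  qed
  have "(\<forall>n. ideal (c n)) \<and> (\<forall>n. c n \<subseteq> c (Suc n))" using cS id cs by blast
  then have "\<exists>m. \<forall>n\<ge>m. c n = c m" using N[unfolded hnoetherian_def, rule_format, of c] by blast
  then obtain m where m: "\<forall>n\<ge>m. c n = c m" by blast
  have "m \<le> Suc m" by simp
  then have "c (Suc m) = c m" using m by blast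
  then show False using cs[of m] by simp
qed

definition dcc_above where "dcc_above I \<longleftrightarrow> (\<forall>J::nat \<Rightarrow> 'a set. (\<forall>n. ideal (J n)) \<and> (\<forall>n. J (Suc n) \<subseteq> J n)
   \<and> (\<forall>n. I \<subseteq> J n) \<longrightarrow> (\<exists>m. \<forall>n\<ge>m. J n = J m))"

lemma modular: assumes J: "ideal J" and J': "ideal J'" and sub: "J' \<subseteq> J" and a: "a \<in> R"
  and e1: "hs J (pr a) = hs J' (pr a)" and e2: "col J a = col J' a" shows "J = J'"
proof
  show "J' \<subseteq> J" by fact
  show "J \<subseteq> J'"
  proof
    fix x assume x: "x \<in> J"
    have xR: "x \<in> R" using x ideal_D(2)[OF J] by blast
    have "x \<in> hs J' (pr a)" using hs_left[OF J ideal_pr[OF a]] x e1 by blast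
    then obtain j y where j: "j \<in> J'" and y: "y \<in> pr a" and xy: "x \<in> add j y" unfolding hs_def by blast
    obtain r where r: "r \<in> R" "y = mul r a" using y unfolding pr_def by blast
    have jR: "j \<in> R" using j ideal_D(2)[OF J'] by blast
    have yR: "y \<in> R" using r mul_closed a by simp
    have "y \<in> add (neg j) x" using rev1[OF jR yR xR xy] .
    also have "\<dots> = add x (neg j)" using add_comm neg_prop(1)[OF jR] xR by simp
    also have "\<dots> \<subseteq> J" using ideal_D(3)[OF J x] j sub by blast
    finally have "r \<in> col J a" unfolding col_def using r by simp
    then have "mul r a \<in> J'" using e2 unfolding col_def by blast
    then show "x \<in> J'" using ideal_add[OF J' j] xy r by blast
  qed
qed

lemma dcc_R: "dcc_above R"
  unfolding dcc_above_def
proof (intro allI impI)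
  fix J :: "nat \<Rightarrow> 'a set" assume "(\<forall>n. ideal (J n)) \<and> (\<forall>n. J (Suc n) \<subseteq> J n) \<and> (\<forall>n. R \<subseteq> J n)"
  then have "J n = R" for n using ideal_D(2) by blast
  then show "\<exists>m. \<forall>n\<ge>m. J n = J m" by simp
qed

lemma dcc_max: assumes I: "ideal I" and mx: "\<And>K. ideal K \<Longrightarrow> I \<subseteq> K \<Longrightarrow> K = I \<or> K = R"
  shows "dcc_above I"
  unfolding dcc_above_def
proof (intro allI impI)
  fix J :: "nat \<Rightarrow> 'a set" assume A: "(\<forall>n. ideal (J n)) \<and> (\<forall>n. J (Suc n) \<subseteq> J n) \<and> (\<forall>n. I \<subseteq> J n)"
  show "\<exists>m. \<forall>n\<ge>m. J n = J m"
  proof (cases "\<exists>n. J n = I")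
    case True
    then obtain m where m: "J m = I" by blast
    have "\<forall>n\<ge>m. J n = J m"
    proof (intro allI impI)
      fix n assume "m \<le> n"
      then have "J n \<subseteq> J m" using dec_le[of J m n] A by blast
      then show "J n = J m" using A m by blast
    qed
    then show ?thesis by blast
  next
    case False
    then have "J n = R" for n using mx A by blast
    then show ?thesis by simp
  qed
qed


lemma col_mono: "J' \<subseteq> J \<Longrightarrow> col J' a \<subseteq> col J a"
  unfolding col_def by blast

lemma dcc_apply: assumes "dcc_above K" "\<And>n. ideal (J n)" "\<And>n. J (Suc n) \<subseteq> J n" "\<And>n. K \<subseteq> J n"
  shows "\<exists>m. \<forall>n\<ge>m. J n = J m"
  using assms unfolding dcc_above_def by blast

lemma thmA: assumes N: "hnoetherian R add mul z" and AM: allmax shows "hartinian R add mul z"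
proof (rule ccontr)
  assume nA: "\<not> hartinian R add mul z"
  have "\<not> dcc_above {z}"
  proof
    assume d: "dcc_above {z}"
    have "hartinian R add mul z" unfolding hartinian_def
    proof (intro allI impI)
      fix J :: "nat \<Rightarrow> 'a set" assume A: "(\<forall>n. ideal (J n)) \<and> (\<forall>n. J (Suc n) \<subseteq> J n)"
      show "\<exists>m. \<forall>n\<ge>m. J n = J m"
      proof (rule dcc_apply[OF d])
        show "ideal (J n)" "J (Suc n) \<subseteq> J n" for n using A by auto
        show "{z} \<subseteq> J n" for n using A ideal_z by blast
      qed
    qed
    then show False using nA by blast
  qed
  define S where "S = {I. ideal I \<and> \<not> dcc_above I}"
  have "\<exists>M\<in>S. \<forall>K\<in>S. M \<subseteq> K \<longrightarrow> K = M"
  proof (rule noeth_max[OF N])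
    show "S \<noteq> {}" unfolding S_def using ideal_zero \<open>\<not> dcc_above {z}\<close> by blast
    show "\<And>I. I \<in> S \<Longrightarrow> ideal I" unfolding S_def by blast
  qed
  then obtain I where IS: "I \<in> S" and mx: "\<And>K. K \<in> S \<Longrightarrow> I \<subseteq> K \<Longrightarrow> K = I" by blast
  have I: "ideal I" and nd: "\<not> dcc_above I" using IS unfolding S_def by auto
  have IR: "I \<noteq> R" using nd dcc_R by blast
  have mx2: "\<And>K. ideal K \<Longrightarrow> I \<subseteq> K \<Longrightarrow> K \<noteq> I \<Longrightarrow> dcc_above K"
    using mx unfolding S_def by blast
  have prm: "\<And>a b. a \<in> R \<Longrightarrow> b \<in> R \<Longrightarrow> mul a b \<in> I \<Longrightarrow> a \<in> I \<or> b \<in> I"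
  proof -
    fix a b assume a: "a \<in> R" and b: "b \<in> R" and ab: "mul a b \<in> I"
    show "a \<in> I \<or> b \<in> I"
    proof (rule ccontr)
      assume nab: "\<not> (a \<in> I \<or> b \<in> I)"
      define K where "K = hs I (pr a)"
      have K: "ideal K" unfolding K_def using ideal_hs[OF I ideal_pr[OF a]] .
      have IK: "I \<subseteq> K" unfolding K_def using hs_left[OF I ideal_pr[OF a]] .
      have "a \<in> K" unfolding K_def using hs_right[OF I ideal_pr[OF a]] pr_self[OF a] by blast
      then have "K \<noteq> I" using nab by blast
      then have dK: "dcc_above K" using mx2 K IK by blast
      define L where "L = col I a"
      have L: "ideal L" unfolding L_def using ideal_col[OF I a] .
      have IL: "I \<subseteq> L"
      proof
        fix x assume x: "x \<in> I"
        then have "x \<in> R" "mul x a \<in> I" using ideal_mul(2)[OF I a x] ideal_D(2)[OF I] by auto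
        then show "x \<in> L" unfolding L_def col_def by blast
      qed
      have "mul b a \<in> I" using ab mul_comm a b by simp
      then have "b \<in> L" unfolding L_def col_def using b by simp
      then have "L \<noteq> I" using nab by blast
      then have dL: "dcc_above L" using mx2 L IL by blast
      have "dcc_above I" unfolding dcc_above_def
      proof (intro allI impI)
        fix J :: "nat \<Rightarrow> 'a set" assume A: "(\<forall>n. ideal (J n)) \<and> (\<forall>n. J (Suc n) \<subseteq> J n) \<and> (\<forall>n. I \<subseteq> J n)"
        have Jid: "ideal (J n)" for n using A by blast
        have Jdec: "J (Suc n) \<subseteq> J n" for n using A by blast
        have JI: "I \<subseteq> J n" for n using A by blast
        have "\<exists>m. \<forall>n\<ge>m. hs (J n) (pr a) = hs (J m) (pr a)"
        proof (rule dcc_apply[OF dK])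
          show "ideal (hs (J n) (pr a))" for n using ideal_hs[OF Jid ideal_pr[OF a]] .
          show "hs (J (Suc n)) (pr a) \<subseteq> hs (J n) (pr a)" for n using hs_mono[OF Jdec order_refl] .
          show "K \<subseteq> hs (J n) (pr a)" for n unfolding K_def using hs_mono[OF JI order_refl] .
        qed
        then obtain m1 where m1: "\<forall>n\<ge>m1. hs (J n) (pr a) = hs (J m1) (pr a)" by blast
        have "\<exists>m. \<forall>n\<ge>m. col (J n) a = col (J m) a"
        proof (rule dcc_apply[OF dL])
          show "ideal (col (J n) a)" for n using ideal_col[OF Jid a] .
          show "col (J (Suc n)) a \<subseteq> col (J n) a" for n using col_mono[OF Jdec] .
          show "L \<subseteq> col (J n) a" for n unfolding L_def using col_mono[OF JI] .
        qed
        then obtain m2 where m2: "\<forall>n\<ge>m2. col (J n) a = col (J m2) a" by blast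
        define m where "m = max m1 m2"
        have step: "J (Suc n) = J n" if mn: "m \<le> n" for n
        proof (rule modular[symmetric])
          show "ideal (J n)" "ideal (J (Suc n))" "J (Suc n) \<subseteq> J n" using Jid Jdec by auto
          show "a \<in> R" by fact
          have l1: "m1 \<le> n" "m1 \<le> Suc n" "m2 \<le> n" "m2 \<le> Suc n" using mn unfolding m_def by auto
          have "hs (J n) (pr a) = hs (J m1) (pr a)" using m1 l1(1) by blast
          moreover have "hs (J (Suc n)) (pr a) = hs (J m1) (pr a)" using m1 l1(2) by blast
          ultimately show "hs (J n) (pr a) = hs (J (Suc n)) (pr a)" by simp
          have "col (J n) a = col (J m2) a" using m2 l1(3) by blast
          moreover have "col (J (Suc n)) a = col (J m2) a" using m2 l1(4) by blast
          ultimately show "col (J n) a = col (J (Suc n)) a" by simp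
        qed
        have "J n = J m" if "m \<le> n" for n
          using that
        proof (induction n rule: dec_induct)
          case base then show ?case by simp
        next
          case (step k) then show ?case using \<open>\<And>n. m \<le> n \<Longrightarrow> J (Suc n) = J n\<close> by simp
        qed
        then show "\<exists>m. \<forall>n\<ge>m. J n = J m" by blast
      qed
      then show False using nd by blast
    qed
  qed
  have pr: "prime I" unfolding prime_hyperideal_def using I IR prm by blast
  have "dcc_above I"
  proof (rule dcc_max[OF I])
    fix K assume "ideal K" "I \<subseteq> K"
    then show "K = I \<or> K = R" using AM pr unfolding allmax_def by blast
  qed
  then show False using nd by blast
qed

definition pw where "pw a n = ((mul a) ^^ n) u"

lemma pw_0: "pw a 0 = u" by (simp add: pw_def)
lemma pw_Suc: "pw a (Suc n) = mul a (pw a n)" by (simp add: pw_def)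
lemma pw_R: "a \<in> R \<Longrightarrow> pw a n \<in> R"
  by (induction n) (auto simp: pw_0 pw_Suc u_in mul_closed)

lemma pr_sub: assumes "a \<in> R" "x \<in> R" shows "pr (mul a x) \<subseteq> pr x"
proof
  fix y assume "y \<in> pr (mul a x)"
  then obtain r where r: "r \<in> R" "y = mul r (mul a x)" unfolding pr_def by blast
  then have "y = mul (mul r a) x" using mul_assoc assms by simp
  then show "y \<in> pr x" unfolding pr_def using mul_closed r(1) assms(1) by blast
qed

lemma thmB1: assumes Art: "hartinian R add mul z" shows allmax
  unfolding allmax_def
proof (intro allI impI)
  fix P J assume P: "prime P" and J: "ideal J" and PJ: "P \<subseteq> J"
  show "J = P \<or> J = R"
  proof (cases "J = P")
    case True then show ?thesis by simp
  next
    case False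
    then obtain a where a: "a \<in> J" "a \<notin> P" using PJ by blast
    have aR: "a \<in> R" using a ideal_D(2)[OF J] by blast
    have PI: "ideal P" using prime_D(1)[OF P] .
    have pnP: "pw a n \<notin> P" for n
    proof (induction n)
      case 0 then show ?case using prime_not_u[OF P] by (simp add: pw_0)
    next
      case (Suc n) then show ?case unfolding pw_Suc using prime_D(3)[OF P aR pw_R[OF aR, of n]] a(2) by blast
    qed
    define K where "K n = hs P (pr (pw a n))" for n
    have Kid: "ideal (K n)" for n unfolding K_def using ideal_hs[OF PI ideal_pr[OF pw_R[OF aR]]] .
    have Kdec: "K (Suc n) \<subseteq> K n" for n
      unfolding K_def pw_Suc using hs_mono[OF order_refl pr_sub[OF aR pw_R[OF aR]]] .
    have "(\<forall>n. ideal (K n)) \<and> (\<forall>n. K (Suc n) \<subseteq> K n)" using Kid Kdec by blast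
    then have "\<exists>m. \<forall>n\<ge>m. K n = K m" using Art[unfolded hartinian_def, rule_format, of K] by blast
    then obtain m where m: "\<forall>n\<ge>m. K n = K m" by blast
    define c where "c = pw a m"
    have cR: "c \<in> R" unfolding c_def using pw_R[OF aR] .
    have "m \<le> Suc m" by simp
    then have "K (Suc m) = K m" using m by blast
    moreover have "c \<in> K m" unfolding K_def c_def
      using hs_right[OF PI ideal_pr[OF pw_R[OF aR]]] pr_self[OF pw_R[OF aR]] by blast
    ultimately have "c \<in> hs P (pr (mul a c))" unfolding K_def c_def pw_Suc by simp
    then obtain p y where p: "p \<in> P" and y: "y \<in> pr (mul a c)" and cy: "c \<in> add p y"
      unfolding hs_def by blast
    obtain r where r: "r \<in> R" "y = mul r (mul a c)" using y unfolding pr_def by blast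
    define t0 where "t0 = mul r a"
    have t0R: "t0 \<in> R" unfolding t0_def using mul_closed r aR by simp
    have t0J: "t0 \<in> J" unfolding t0_def using ideal_mul(1)[OF J r(1) a(1)] .
    have "mul r (mul a c) = mul (mul r a) c" using mul_assoc[OF r(1) aR cR] by simp
    also have "\<dots> = mul c (mul r a)" using mul_comm[OF _ cR] mul_closed[OF r(1) aR] by simp
    finally have yc: "y = mul c t0" unfolding t0_def using r(2) by simp
    have pR: "p \<in> R" using p ideal_D(2)[OF PI] by blast
    have yR: "y \<in> R" using yc mul_closed cR t0R by simp
    have p1: "p \<in> add c (neg y)" using rev2[OF pR yR cR cy] .
    have e1: "neg y = mul c (neg t0)" using mul_neg[OF cR t0R] yc by simp
    have e2: "mul c u = c" using mul_u2[OF cR] by simp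
    have "p \<in> add (mul c u) (mul c (neg t0))" using p1 e1 e2 by simp
    also have "\<dots> = mul c ` add u (neg t0)" using distrib[OF cR u_in neg_prop(1)[OF t0R]] by simp
    finally obtain t where t: "t \<in> add u (neg t0)" and pt: "p = mul c t" by blast
    have tR: "t \<in> R" using t add_closed u_in neg_prop(1)[OF t0R] by blast
    have "t \<in> P" using prime_D(3)[OF P cR tR] pt p pnP c_def by blast
    then have tJ: "t \<in> J" using PJ by blast
    have "u \<in> add t (neg (neg t0))" using rev2[OF u_in neg_prop(1)[OF t0R] tR t] .
    then have "u \<in> add t t0" using neg_neg[OF t0R] by simp
    then have "u \<in> J" using ideal_add[OF J tJ t0J] by blast
    then show ?thesis using ideal_u[OF J] by blast
  qed
qed

lemma thmB2: assumes Art: "hartinian R add mul z" and AM: allmax shows "finite (hSpec R add mul z)"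
proof (rule ccontr)
  assume "infinite (hSpec R add mul z)"
  from infinite_iff_countable_subset[THEN iffD1, OF this]
  obtain f :: "nat \<Rightarrow> 'a set" where inj: "inj f" and rf: "range f \<subseteq> hSpec R add mul z"
    by blast
  have fp: "prime (f n)" for n
  proof -
    have "f n \<in> hSpec R add mul z" using rf by blast
    then show ?thesis by (simp add: hSpec_def)
  qed
  define C where "C n = \<Inter>(f ` {..n})" for n
  have Cid: "ideal (C n)" for n unfolding C_def
    by (rule ideal_Inter) (use prime_D(1)[OF fp] in auto)
  have Cdec: "C (Suc n) \<subseteq> C n" for n unfolding C_def by auto
  have "(\<forall>n. ideal (C n)) \<and> (\<forall>n. C (Suc n) \<subseteq> C n)" using Cid Cdec by blast
  then have "\<exists>m. \<forall>n\<ge>m. C n = C m" using Art[unfolded hartinian_def, rule_format, of C] by blast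
  then obtain m where m: "\<forall>n\<ge>m. C n = C m" by blast
  have "m \<le> Suc m" by simp
  then have "C (Suc m) = C m" using m by blast
  then have "C m = C (Suc m)" by (rule sym)
  also have "\<dots> \<subseteq> f (Suc m)" unfolding C_def by auto
  finally have "\<Inter>(f ` {..m}) \<subseteq> f (Suc m)" unfolding C_def .
  moreover have "\<And>I. I \<in> f ` {..m} \<Longrightarrow> ideal I" using prime_D(1)[OF fp] by blast
  ultimately obtain I where I: "I \<in> f ` {..m}" "I \<subseteq> f (Suc m)"
    using prime_Inter[OF fp[of "Suc m"], of "f ` {..m}"] by auto
  then obtain i where i: "i \<le> m" "I = f i" by blast
  have fi: "f i \<subseteq> f (Suc m)" using I i by simp
  have "f (Suc m) = f i \<or> f (Suc m) = R" using AM[unfolded allmax_def, rule_format, OF fp[of i] prime_D(1)[OF fp[of "Suc m"]] fi] .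
  then have "f (Suc m) = f i" using prime_D(2)[OF fp] by blast
  then have "Suc m = i" using inj unfolding inj_def by blast
  then show False using i by simp
qed

lemma max_prime: assumes M: "ideal M" and MR: "M \<noteq> R"
  and mx: "\<And>J. ideal J \<Longrightarrow> M \<subseteq> J \<Longrightarrow> J = M \<or> J = R" shows "prime M"
proof -
  have prm: "a \<in> M \<or> b \<in> M" if a: "a \<in> R" and b: "b \<in> R" and ab: "mul a b \<in> M" for a b
  proof (rule ccontr)
    assume nab: "\<not> (a \<in> M \<or> b \<in> M)"
    have K: "ideal (hs M (pr a))" using ideal_hs[OF M ideal_pr[OF a]] .
    have "a \<in> hs M (pr a)" using hs_right[OF M ideal_pr[OF a]] pr_self[OF a] by blast
    then have "hs M (pr a) \<noteq> M" using nab by blast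
    then have "hs M (pr a) = R" using mx[OF K hs_left[OF M ideal_pr[OF a]]] by blast
    then have "u \<in> hs M (pr a)" using u_in by simp
    then obtain m y where m: "m \<in> M" and y: "y \<in> pr a" and uy: "u \<in> add m y" unfolding hs_def by blast
    obtain r where r: "r \<in> R" "y = mul r a" using y unfolding pr_def by blast
    have mR: "m \<in> R" using m ideal_D(2)[OF M] by blast
    have yR: "y \<in> R" using r mul_closed a by simp
    have "mul b u \<in> mul b ` add m y" using uy by blast
    then have bin: "b \<in> add (mul b m) (mul b y)" using distrib[OF b mR yR] mul_u2[OF b] by simp
    have "mul b y = mul b (mul r a)" using r by simp
    also have "\<dots> = mul (mul b r) a" using mul_assoc[OF b r(1) a] by simp
    also have "\<dots> = mul (mul r b) a" using mul_comm[OF b r(1)] by simp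
    also have "\<dots> = mul r (mul b a)" using mul_assoc[OF r(1) b a] by simp
    also have "\<dots> = mul r (mul a b)" using mul_comm[OF b a] by simp
    finally have "mul b y \<in> M" using ideal_mul(1)[OF M r(1) ab] by simp
    moreover have "mul b m \<in> M" using ideal_mul(1)[OF M b m] .
    ultimately have "b \<in> M" using ideal_add[OF M] bin by blast
    then show False using nab by blast
  qed
  show ?thesis unfolding prime_hyperideal_def using M MR prm by blast
qed

lemma prime_above: assumes N: "hnoetherian R add mul z" and J: "ideal J" and JR: "J \<noteq> R"
  shows "\<exists>M. prime M \<and> J \<subseteq> M"
proof -
  define S where "S = {K. ideal K \<and> J \<subseteq> K \<and> K \<noteq> R}"
  have "\<exists>M\<in>S. \<forall>K\<in>S. M \<subseteq> K \<longrightarrow> K = M"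
  proof (rule noeth_max[OF N])
    show "S \<noteq> {}" unfolding S_def using J JR by blast
    show "\<And>I. I \<in> S \<Longrightarrow> ideal I" unfolding S_def by blast
  qed
  then obtain M where MS: "M \<in> S" and mx: "\<And>K. K \<in> S \<Longrightarrow> M \<subseteq> K \<Longrightarrow> K = M" by blast
  have M: "ideal M" "J \<subseteq> M" "M \<noteq> R" using MS unfolding S_def by auto
  have "prime M"
  proof (rule max_prime[OF M(1) M(3)])
    fix K assume K: "ideal K" "M \<subseteq> K"
    show "K = M \<or> K = R"
    proof (cases "K = R")
      case False
      then have "K \<in> S" unfolding S_def using K M by blast
      then show ?thesis using mx K by blast
    qed simp
  qed
  then show ?thesis using M by blast
qed

abbreviation Spec where "Spec \<equiv> hSpec R add mul z"
abbreviation VV where "VV I \<equiv> hV R add mul z I"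
definition zp where "zp U \<longleftrightarrow> (\<exists>I. ideal I \<and> U = Spec - VV I)"

lemma istop: "istopology zp"
  unfolding istopology_def
proof (intro conjI allI impI)
  fix S T assume "zp S" "zp T"
  then obtain I J where I: "ideal I" "S = Spec - VV I" and J: "ideal J" "T = Spec - VV J"
    unfolding zp_def by blast
  have "S \<inter> T = Spec - VV (I \<inter> J)"
  proof (rule set_eqI)
    fix P
    show "P \<in> S \<inter> T \<longleftrightarrow> P \<in> Spec - VV (I \<inter> J)"
    proof (cases "P \<in> Spec")
      case True
      then have Pp: "prime P" unfolding hSpec_def by simp
      have "I \<inter> J \<subseteq> P \<longleftrightarrow> I \<subseteq> P \<or> J \<subseteq> P" using prime_Int[OF Pp I(1) J(1)] by blast
      then show ?thesis using True I J unfolding hV_def by blast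
    next
      case False then show ?thesis using I J by blast
    qed
  qed
  then show "zp (S \<inter> T)" unfolding zp_def using ideal_Int[OF I(1) J(1)] by blast
next
  fix KK assume KK: "\<forall>K\<in>KK. zp K"
  define II where "II = {I. ideal I \<and> Spec - VV I \<in> KK}"
  define J where "J = \<Inter>{L. ideal L \<and> \<Union>II \<subseteq> L}"
  have J: "ideal J" unfolding J_def
    by (rule ideal_Inter) (use ideal_R II_def ideal_D(2) in auto)
  have key: "J \<subseteq> P \<longleftrightarrow> (\<forall>I\<in>II. I \<subseteq> P)" if P: "prime P" for P
  proof
    assume "J \<subseteq> P"
    moreover have "\<Union>II \<subseteq> J" unfolding J_def by blast
    ultimately show "\<forall>I\<in>II. I \<subseteq> P" by blast
  next
    assume "\<forall>I\<in>II. I \<subseteq> P"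
    then have "P \<in> {L. ideal L \<and> \<Union>II \<subseteq> L}" using prime_D(1)[OF P] by blast
    then show "J \<subseteq> P" unfolding J_def by blast
  qed
  have "\<Union>KK = Spec - VV J"
  proof (rule set_eqI)
    fix P
    show "P \<in> \<Union>KK \<longleftrightarrow> P \<in> Spec - VV J"
    proof
      assume "P \<in> \<Union>KK"
      then obtain K where K: "K \<in> KK" "P \<in> K" by blast
      then obtain I where I: "ideal I" "K = Spec - VV I" using KK unfolding zp_def by blast
      then have "I \<in> II" unfolding II_def using K by blast
      moreover have Ps: "P \<in> Spec" "\<not> I \<subseteq> P" using K I unfolding hV_def by auto
      ultimately have "\<not> J \<subseteq> P" using key[of P] unfolding hSpec_def by auto
      then show "P \<in> Spec - VV J" using Ps unfolding hV_def by blast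
    next
      assume A: "P \<in> Spec - VV J"
      then have Ps: "P \<in> Spec" "\<not> J \<subseteq> P" unfolding hV_def by auto
      then obtain I where I: "I \<in> II" "\<not> I \<subseteq> P" using key[of P] unfolding hSpec_def by auto
      then have "Spec - VV I \<in> KK" unfolding II_def by blast
      moreover have "P \<in> Spec - VV I" using Ps I unfolding hV_def by blast
      ultimately show "P \<in> \<Union>KK" by blast
    qed
  qed
  then show "zp (\<Union>KK)" unfolding zp_def using J by blast
qed

lemma openin_z: "openin (zariski R add mul z) = zp"
proof -
  have "zariski R add mul z = topology zp" unfolding zariski_def zp_def by simp
  then show ?thesis using istop by simp
qed

lemma thmC: assumes AM: allmax and fin: "finite Spec"
  shows "zariski R add mul z = discrete_topology Spec"
  unfolding topology_eq openin_z openin_discrete_topology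
proof (intro allI iffI)
  fix S assume "zp S"
  then show "S \<subseteq> Spec" unfolding zp_def by blast
next
  fix S assume S: "S \<subseteq> Spec"
  define F where "F = Spec - S"
  have Ffin: "finite F" unfolding F_def using fin by simp
  show "zp S"
  proof (cases "F = {}")
    case True
    have "VV R = {}"
    proof -
      have "\<not> R \<subseteq> P" if "prime P" for P
        using prime_D(2)[OF that] ideal_D(2)[OF prime_D(1)[OF that]] by blast
      then show ?thesis unfolding hV_def hSpec_def by blast
    qed
    then have "S = Spec - VV R" using True S unfolding F_def by blast
    then show ?thesis unfolding zp_def using ideal_R by blast
  next
    case False
    have Fp: "\<And>Q. Q \<in> F \<Longrightarrow> prime Q" unfolding F_def hSpec_def by blast
    have Fid: "\<And>Q. Q \<in> F \<Longrightarrow> ideal Q" using Fp prime_D(1) by blast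
    have I: "ideal (\<Inter>F)" using ideal_Inter[OF False Fid] by blast
    have "VV (\<Inter>F) = F"
    proof (rule set_eqI)
      fix P show "P \<in> VV (\<Inter>F) \<longleftrightarrow> P \<in> F"
      proof
        assume "P \<in> VV (\<Inter>F)"
        then have Pp: "prime P" and sub: "\<Inter>F \<subseteq> P" unfolding hV_def hSpec_def by auto
        obtain Q where Q: "Q \<in> F" "Q \<subseteq> P" using prime_Inter[OF Pp Ffin False Fid sub] by blast
        have "P = Q \<or> P = R" using AM[unfolded allmax_def, rule_format, OF Fp[OF Q(1)] prime_D(1)[OF Pp] Q(2)] .
        then show "P \<in> F" using prime_D(2)[OF Pp] Q by blast
      next
        assume "P \<in> F"
        then show "P \<in> VV (\<Inter>F)" unfolding hV_def using F_def by blast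
      qed
    qed
    then have "S = Spec - VV (\<Inter>F)" using S unfolding F_def by blast
    then show ?thesis unfolding zp_def using I by blast
  qed
qed

lemma thmD: assumes N: "hnoetherian R add mul z" and D: "zariski R add mul z = discrete_topology Spec"
  shows allmax
  unfolding allmax_def
proof (intro allI impI)
  fix P J assume P: "prime P" and J: "ideal J" and PJ: "P \<subseteq> J"
  show "J = P \<or> J = R"
  proof (cases "J = R")
    case False
    obtain M where M: "prime M" "J \<subseteq> M" using prime_above[OF N J False] by blast
    have "openin (zariski R add mul z) (Spec - {P})" using D by simp
    then have "zp (Spec - {P})" using openin_z by simp
    then obtain I where I: "ideal I" "Spec - {P} = Spec - VV I" unfolding zp_def by blast
    have PS: "P \<in> Spec" using P unfolding hSpec_def by simp
    have MS: "M \<in> Spec" using M unfolding hSpec_def by simp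
    have VI: "VV I = {P}"
    proof -
      have "VV I \<subseteq> Spec" unfolding hV_def by blast
      then show ?thesis using I(2) PS by blast
    qed
    then have "I \<subseteq> P" unfolding hV_def by blast
    then have "M \<in> VV I" using MS PJ M(2) unfolding hV_def by blast
    then have "M = P" using VI by blast
    then show ?thesis using PJ M(2) by blast
  qed simp
qed

end

theorem mainTheorem12:
  fixes R :: "'a set" and add :: "'a \<Rightarrow> 'a \<Rightarrow> 'a set" and mul :: "'a \<Rightarrow> 'a \<Rightarrow> 'a"
    and z u :: 'a
  assumes "hyperring R add mul z u"
    and "hnoetherian R add mul z"
  shows "(hartinian R add mul z \<longleftrightarrow>
            (zariski R add mul z = discrete_topology (hSpec R add mul z)
             \<and> finite (hSpec R add mul z)))
       \<and> (hartinian R add mul z \<longleftrightarrow>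
            zariski R add mul z = discrete_topology (hSpec R add mul z))"
proof -
  interpret hr R add mul z u by (rule hr.intro) (rule assms(1))
  have i_ii: "zariski R add mul z = discrete_topology (hSpec R add mul z) \<and> finite (hSpec R add mul z)"
    if "hartinian R add mul z"
    using thmB1[OF that] thmB2[OF that] thmC by blast
  have iii_i: "hartinian R add mul z" if "zariski R add mul z = discrete_topology (hSpec R add mul z)"
    using thmA[OF assms(2) thmD[OF assms(2) that]] .
  show ?thesis using i_ii iii_i by blast
qed

end
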